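(* Let $L$ be a Lie algebra with $Z(L)=0$ and let $I$ be an ideal of $L$. Then $\mathrm{Ann}_L(I)=0$ if and only if $\mathrm{r.ann}_{A(L)}(A_L(I))=0$.
   Context: Lie algebras over a commutative unital ring $\Phi$. $\mathrm{ad}_x(y)=[x,y]$; $A(L)$ is the associative subalgebra of $\mathrm{End}_\Phi(L)$ generated by $\{\mathrm{ad}_x:x\in L\}$, and $A_L(I)$ is its subalgebra generated by $\{\mathrm{ad}_x:x\in I\}$. $\mathrm{Ann}_L(X)=\{a\in L:[a,x]=0\ \forall x\in X\}$, $Z(L)=\mathrm{Ann}_L(L)$. For an associative algebra $B$ and $X\subseteq B$, $\mathrm{r.ann}_B(X)=\{b\in B: Xb=0\}$. *)

theory Defs
  imports Main "HOL.Modules"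
begin

definition lie_algebra :: "('r::comm_ring_1 \<Rightarrow> 'l::ab_group_add \<Rightarrow> 'l) \<Rightarrow> ('l \<Rightarrow> 'l \<Rightarrow> 'l) \<Rightarrow> bool" where
  "lie_algebra scale br \<longleftrightarrow> module scale \<and>
     (\<forall>x y z. br (x + y) z = br x z + br y z) \<and>
     (\<forall>x y z. br x (y + z) = br x y + br x z) \<and>
     (\<forall>c x y. br (scale c x) y = scale c (br x y)) \<and>
     (\<forall>c x y. br x (scale c y) = scale c (br x y)) \<and>
     (\<forall>x. br x x = 0) \<and>
     (\<forall>x y z. br x (br y z) + br y (br z x) + br z (br x y) = 0)"

definition lie_ideal :: "('r::comm_ring_1 \<Rightarrow> 'l::ab_group_add \<Rightarrow> 'l) \<Rightarrow> ('l \<Rightarrow> 'l \<Rightarrow> 'l) \<Rightarrow> 'l set \<Rightarrow> bool" where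
  "lie_ideal scale br I \<longleftrightarrow> 0 \<in> I \<and> (\<forall>x\<in>I. \<forall>y\<in>I. x + y \<in> I) \<and>
     (\<forall>c. \<forall>x\<in>I. scale c x \<in> I) \<and> (\<forall>a. \<forall>x\<in>I. br a x \<in> I)"

definition ad :: "('l \<Rightarrow> 'l \<Rightarrow> 'l) \<Rightarrow> 'l \<Rightarrow> 'l \<Rightarrow> 'l" where
  "ad br x = (\<lambda>y. br x y)"

definition lie_ann :: "('l \<Rightarrow> 'l \<Rightarrow> 'l::zero) \<Rightarrow> 'l set \<Rightarrow> 'l set" where
  "lie_ann br X = {a. \<forall>x\<in>X. br a x = 0}"

definition lie_center :: "('l \<Rightarrow> 'l \<Rightarrow> 'l::zero) \<Rightarrow> 'l set" where
  "lie_center br = lie_ann br UNIV"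

text \<open>The (non-unital) associative subalgebra of End(L) generated by a set S of
  endomorphisms: closed under zero, pointwise addition, scalar multiples and composition
  (product f g = f o g).\<close>
inductive_set gen_assoc_alg :: "('r::comm_ring_1 \<Rightarrow> 'l::ab_group_add \<Rightarrow> 'l) \<Rightarrow> ('l \<Rightarrow> 'l) set \<Rightarrow> ('l \<Rightarrow> 'l) set"
  for scale :: "'r \<Rightarrow> 'l \<Rightarrow> 'l" and S :: "('l \<Rightarrow> 'l) set" where
  gen: "f \<in> S \<Longrightarrow> f \<in> gen_assoc_alg scale S"
| zero: "(\<lambda>_. 0) \<in> gen_assoc_alg scale S"
| add: "f \<in> gen_assoc_alg scale S \<Longrightarrow> g \<in> gen_assoc_alg scale S \<Longrightarrow> (\<lambda>x. f x + g x) \<in> gen_assoc_alg scale S"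
| smult: "f \<in> gen_assoc_alg scale S \<Longrightarrow> (\<lambda>x. scale c (f x)) \<in> gen_assoc_alg scale S"
| comp: "f \<in> gen_assoc_alg scale S \<Longrightarrow> g \<in> gen_assoc_alg scale S \<Longrightarrow> f \<circ> g \<in> gen_assoc_alg scale S"

definition A_L :: "('r::comm_ring_1 \<Rightarrow> 'l::ab_group_add \<Rightarrow> 'l) \<Rightarrow> ('l \<Rightarrow> 'l \<Rightarrow> 'l) \<Rightarrow> 'l set \<Rightarrow> ('l \<Rightarrow> 'l) set" where
  "A_L scale br I = gen_assoc_alg scale (ad br ` I)"

definition r_ann :: "('l \<Rightarrow> 'l::zero) set \<Rightarrow> ('l \<Rightarrow> 'l) set \<Rightarrow> ('l \<Rightarrow> 'l) set" where
  "r_ann B X = {b \<in> B. \<forall>a\<in>X. a \<circ> b = (\<lambda>_. 0)}"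

end

theory Submission
  imports Defs
begin

lemma gen_zero:
  assumes "module scale" "\<And>g. g \<in> S \<Longrightarrow> g 0 = 0" "f \<in> gen_assoc_alg scale S"
  shows "f 0 = 0"
  using assms(3)
proof (induction rule: gen_assoc_alg.induct)
  case (smult f c) then show ?case using module.scale_zero_right[OF assms(1)] by simp
qed (auto simp: assms(2))

lemma gen_kill:
  assumes "module scale" "\<And>g. g \<in> S \<Longrightarrow> g 0 = 0" "\<And>g. g \<in> S \<Longrightarrow> g \<circ> b = (\<lambda>_. 0)"
    "f \<in> gen_assoc_alg scale S"
  shows "f \<circ> b = (\<lambda>_. 0)"
  using assms(4)
proof (induction rule: gen_assoc_alg.induct)
  case (gen f) then show ?case using assms(3) by simp
next
  case zero then show ?case by (simp add: comp_def)
next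
  case (add f g) then show ?case by (simp add: comp_def fun_eq_iff)
next
  case (smult f c) then show ?case using module.scale_zero_right[OF assms(1)]
    by (simp add: comp_def fun_eq_iff)
next
  case (comp f g)
  have "f 0 = 0" by (rule gen_zero[of scale S f]) (use assms comp.hyps(1) in auto)
  then show ?case using comp.IH by (simp add: comp_def fun_eq_iff)
qed

theorem mainTheorem9:
  fixes scale :: "'r::comm_ring_1 \<Rightarrow> 'l::ab_group_add \<Rightarrow> 'l"
    and br :: "'l \<Rightarrow> 'l \<Rightarrow> 'l"
    and I :: "'l set"
  assumes "lie_algebra scale br"
    and "lie_center br = {0}"
    and "lie_ideal scale br I"
  shows "lie_ann br I = {0} \<longleftrightarrow> r_ann (A_L scale br UNIV) (A_L scale br I) = {\<lambda>_. 0}"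
proof -
  have mod: "module scale" using assms(1) unfolding lie_algebra_def by blast
  have addl: "\<And>x y z. br (x + y) z = br x z + br y z" and addr: "\<And>x y z. br x (y + z) = br x y + br x z"
    and alt: "\<And>x. br x x = 0"
    and jac: "\<And>x y z. br x (br y z) + br y (br z x) + br z (br x y) = 0"
    using assms(1) unfolding lie_algebra_def by blast+
  have r0: "\<And>x. br x 0 = 0" using addr[of _ 0 0] by simp
  have l0: "\<And>x. br 0 x = 0" using addl[of 0 0] by simp
  have anti: "\<And>x y. br x y = - br y x"
  proof -
    fix x y
    have "br (x+y) (x+y) = 0" by (rule alt)
    moreover have "br (x+y) (x+y) = br x x + br x y + (br y x + br y y)" by (simp add: addl addr)
    ultimately have "br x y + br y x = 0" using alt by (simp add: algebra_simps)
    then show "br x y = - br y x" by (simp add: eq_neg_iff_add_eq_0)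
  qed
  have ideal: "\<And>a x. x \<in> I \<Longrightarrow> br a x \<in> I" "0 \<in> I" using assms(3) unfolding lie_ideal_def by blast+
  have adz: "\<And>g. g \<in> ad br ` I \<Longrightarrow> g 0 = 0" by (auto simp: ad_def r0)
  have zeroA: "(\<lambda>_. 0) \<in> A_L scale br UNIV" unfolding A_L_def by (rule gen_assoc_alg.zero)
  have zero_in: "(\<lambda>_. 0) \<in> r_ann (A_L scale br UNIV) (A_L scale br I)"
    unfolding r_ann_def using zeroA gen_zero[of scale "ad br ` I", OF mod] by (auto simp: A_L_def comp_def adz)
  show ?thesis
  proof
    assume ann: "lie_ann br I = {0}"
    show "r_ann (A_L scale br UNIV) (A_L scale br I) = {\<lambda>_. 0}"
    proof (rule antisym)
      show "r_ann (A_L scale br UNIV) (A_L scale br I) \<subseteq> {\<lambda>_. 0}"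
      proof
        fix b assume b: "b \<in> r_ann (A_L scale br UNIV) (A_L scale br I)"
        have "b y = 0" for y
        proof -
          have "\<forall>x\<in>I. br (b y) x = 0"
          proof
            fix x assume "x \<in> I"
            then have "ad br x \<in> A_L scale br I" unfolding A_L_def by (auto intro: gen_assoc_alg.gen)
            then have "ad br x \<circ> b = (\<lambda>_. 0)" using b unfolding r_ann_def by blast
            then have "br x (b y) = 0" unfolding ad_def by (metis comp_apply)
            then show "br (b y) x = 0" using anti by (metis neg_equal_0_iff_equal)
          qed
          then have "b y \<in> lie_ann br I" unfolding lie_ann_def by blast
          then show ?thesis using ann by blast
        qed
        then show "b \<in> {\<lambda>_. 0}" by auto
      qed
    qed (use zero_in in blast)
  next
    assume ra: "r_ann (A_L scale br UNIV) (A_L scale br I) = {\<lambda>_. 0}"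
    show "lie_ann br I = {0}"
    proof (rule antisym)
      show "lie_ann br I \<subseteq> {0}"
      proof
        fix a assume a: "a \<in> lie_ann br I"
        have ax: "\<And>x. x \<in> I \<Longrightarrow> br a x = 0" using a unfolding lie_ann_def by blast
        have kill: "g \<circ> ad br a = (\<lambda>_. 0)" if gI: "g \<in> ad br ` I" for g
        proof -
          obtain x where x: "x \<in> I" "g = ad br x" using gI by blast
          have "br x (br a y) = 0" for y
          proof -
            have "br a (br y x) = 0" using ax ideal(1)[OF x(1)] by blast
            moreover have "br x a = 0" using anti ax[OF x(1)] by (metis neg_equal_0_iff_equal)
            moreover have "br x (br a y) + br a (br y x) + br y (br x a) = 0" by (rule jac)
            ultimately show ?thesis by (simp add: r0)
          qed
          then show ?thesis using x by (simp add: ad_def comp_def fun_eq_iff)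
        qed
        have "ad br a \<in> A_L scale br UNIV" unfolding A_L_def by (auto intro: gen_assoc_alg.gen)
        moreover have "\<forall>f\<in>A_L scale br I. f \<circ> ad br a = (\<lambda>_. 0)"
          unfolding A_L_def
        proof
          fix f assume f: "f \<in> gen_assoc_alg scale (ad br ` I)"
          show "f \<circ> ad br a = (\<lambda>_. 0)"
            apply (rule gen_kill[where S="ad br ` I" and b="ad br a" and f=f])
               apply (rule mod)
              apply (erule adz)
             apply (erule kill)
            apply (rule f)
            done
        qed
        ultimately have "ad br a \<in> r_ann (A_L scale br UNIV) (A_L scale br I)"
          unfolding r_ann_def by blast
        then have "ad br a = (\<lambda>_. 0)" using ra by simp
        then have "\<And>y. br a y = 0" unfolding ad_def by (simp add: fun_eq_iff)
        then have "a \<in> lie_center br" unfolding lie_center_def lie_ann_def by simp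
        then show "a \<in> {0}" using assms(2) by blast
      qed
      show "{0} \<subseteq> lie_ann br I" unfolding lie_ann_def using l0 by auto
    qed
  qed
qed

end
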